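(* Let $b \ge k \ge 4$ be integers. Then $$R_{(b,k)} \le \left(\frac{1}{\log b} + \frac{b^2}{(b^2-3b+2)\,\log\frac{b-2}{k-3}}\right)^{-1}.$$
   Context: All logarithms are to base 2. For integers $b\ge k$ and $n\ge1$, a $(b,k)$-hash code of length $n$ is a subset $C\subseteq\{1,\dots,b\}^n$ such that for any $k$ distinct elements of $C$ there is a coordinate $i\in\{1,\dots,n\}$ in which their $i$-th coordinates are pairwise distinct. $A(b,k,n)$ is the largest size of a $(b,k)$-hash code of length $n$, and $R_{(b,k)}=\limsup_{n\to\infty}\frac1n\log A(b,k,n)$. *)

theory Defs
  imports "HOL-Analysis.Analysis" "HOL-Library.Liminf_Limsup"
begin

definition words :: "nat \<Rightarrow> nat \<Rightarrow> nat list set" where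
  "words b n = {xs. length xs = n \<and> set xs \<subseteq> {1..b}}"

definition hash_code :: "nat \<Rightarrow> nat \<Rightarrow> nat \<Rightarrow> nat list set \<Rightarrow> bool" where
  "hash_code b k n C \<longleftrightarrow> C \<subseteq> words b n \<and>
     (\<forall>S. S \<subseteq> C \<and> card S = k \<longrightarrow> (\<exists>i<n. inj_on (\<lambda>x. x ! i) S))"

definition A_hash :: "nat \<Rightarrow> nat \<Rightarrow> nat \<Rightarrow> nat" where
  "A_hash b k n = Max {card C | C. hash_code b k n C}"

definition R_hash :: "nat \<Rightarrow> nat \<Rightarrow> ereal" where
  "R_hash b k = limsup (\<lambda>n. ereal (log 2 (real (A_hash b k n)) / real n))"

end

theory Submission
  imports Defs "HOL-Real_Asymp.Real_Asymp"
begin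

lemma tangent_phi:
  fixes x a :: real
  assumes "2*x + 4*a \<le> 3"
  shows "3*a^2 - 2*a^3 + (6*a - 6*a^2)*(x - a) \<le> 3*x^2 - 2*x^3"
proof -
  have "3*x^2 - 2*x^3 - (3*a^2 - 2*a^3 + (6*a - 6*a^2)*(x - a)) = (x-a)^2*(3-4*a-2*x)"
    by (simp add: algebra_simps power2_eq_square power3_eq_cube)
  moreover have "(x-a)^2*(3-4*a-2*x) \<ge> 0" using assms by simp
  ultimately show ?thesis by linarith
qed

lemma sum_tangent_phi:
  fixes q :: "'u \<Rightarrow> real"
  assumes "finite S" "\<forall>u\<in>S. 2 * q u + 4*a \<le> 3" "sum q S = real (card S) * a"
  shows "real (card S) * (3*a^2 - 2*a^3) \<le> (\<Sum>u\<in>S. 3*(q u)^2 - 2*(q u)^3)"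
proof -
  have "(\<Sum>u\<in>S. 3*a^2 - 2*a^3 + (6*a - 6*a^2)*(q u - a)) \<le> (\<Sum>u\<in>S. 3*(q u)^2 - 2*(q u)^3)"
    by (rule sum_mono) (use assms tangent_phi in auto)
  moreover have "(\<Sum>u\<in>S. 3*a^2 - 2*a^3 + (6*a - 6*a^2)*(q u - a))
      = real (card S) * (3*a^2 - 2*a^3) + (6*a - 6*a^2)*(sum q S - real (card S) * a)"
    by (simp add: sum.distrib sum_distrib_left[symmetric] sum_subtractf)
  ultimately show ?thesis using assms(3) by simp
qed

lemma sum_offdiag:
  fixes X :: "'u \<Rightarrow> 'u \<Rightarrow> real"
  assumes "finite U"
  shows "(\<Sum>u\<in>U. \<Sum>v\<in>U. if u = v then 0 else X u v) = (\<Sum>u\<in>U. \<Sum>v\<in>U. X u v) - (\<Sum>u\<in>U. X u u)"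
proof -
  have "\<And>u. u \<in> U \<Longrightarrow> (\<Sum>v\<in>U. if u = v then 0 else X u v) = (\<Sum>v\<in>U. X u v) - X u u"
  proof -
    fix u assume u: "u \<in> U"
    have "(\<Sum>v\<in>U. if u = v then 0 else X u v) = (\<Sum>v\<in>U. X u v - (if u = v then X u v else 0))"
      by (rule sum.cong) auto
    also have "\<dots> = (\<Sum>v\<in>U. X u v) - X u u" using u assms by (simp add: sum_subtractf)
    finally show "(\<Sum>v\<in>U. if u = v then 0 else X u v) = (\<Sum>v\<in>U. X u v) - X u u" .
  qed
  then have "(\<Sum>u\<in>U. \<Sum>v\<in>U. if u = v then 0 else X u v) = (\<Sum>u\<in>U. (\<Sum>v\<in>U. X u v) - X u u)"
    by (rule sum.cong[OF refl])
  also have "\<dots> = (\<Sum>u\<in>U. \<Sum>v\<in>U. X u v) - (\<Sum>u\<in>U. X u u)" by (simp add: sum_subtractf)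
  finally show ?thesis .
qed


lemma G_bound:
  fixes U :: "'u set" and J :: "'j set" and w :: "'j \<Rightarrow> real" and p :: "'j \<Rightarrow> 'u \<Rightarrow> real"
  assumes U: "finite U" "4 \<le> card U" and J: "finite J"
    and w: "\<forall>j\<in>J. 0 \<le> w j" "sum w J = 1"
    and p: "\<forall>j\<in>J. \<forall>u\<in>U. 0 \<le> p j u" "\<forall>j\<in>J. sum (p j) U = 1"
  shows "(\<Sum>j\<in>J. w j * (\<Sum>u\<in>U. \<Sum>v\<in>U. if u = v then 0 else
            p j u * p j v * (1 - (\<Sum>l\<in>J. w l * p l u) - (\<Sum>l\<in>J. w l * p l v))))
         \<le> (real (card U) - 1) * (real (card U) - 2) / (real (card U))^2"
proof -
  define q where "q u = (\<Sum>l\<in>J. w l * p l u)" for u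
  define B where "B = real (card U)"
  define V where "V u = (\<Sum>j\<in>J. w j * (p j u - q u)^2)" for u
  define E3 where "E3 = 1 - (\<Sum>u\<in>U. 3*(q u)^2 - 2*(q u)^3)"
  have B4: "B \<ge> 4" using U(2) unfolding B_def by simp
  have p1: "\<forall>j\<in>J. \<forall>u\<in>U. p j u \<le> 1"
  proof (intro ballI)
    fix j u assume j: "j \<in> J" and u: "u \<in> U"
    have "p j u \<le> sum (p j) U" by (rule member_le_sum) (use j u p U in auto)
    then show "p j u \<le> 1" using p j by simp
  qed
  have qnn: "\<forall>u\<in>U. 0 \<le> q u" unfolding q_def using w p by (auto intro!: sum_nonneg)
  have q1: "\<forall>u\<in>U. q u \<le> 1"
  proof
    fix u assume u: "u \<in> U"
    have "q u \<le> (\<Sum>l\<in>J. w l * 1)" unfolding q_def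
      by (rule sum_mono) (use w p1 u in \<open>auto intro!: mult_left_le\<close>)
    then show "q u \<le> 1" using w by simp
  qed
  have qsum: "sum q U = 1"
  proof -
    have "sum q U = (\<Sum>l\<in>J. \<Sum>u\<in>U. w l * p l u)" unfolding q_def by (rule sum.swap)
    also have "\<dots> = (\<Sum>l\<in>J. w l * sum (p l) U)" by (simp add: sum_distrib_left)
    also have "\<dots> = (\<Sum>l\<in>J. w l)" using p by (intro sum.cong) auto
    finally show ?thesis using w by simp
  qed
  have Vnn: "\<forall>u. 0 \<le> V u" unfolding V_def using w by (auto intro!: sum_nonneg)
  have inner: "(\<Sum>u\<in>U. \<Sum>v\<in>U. if u = v then 0 else p j u * p j v * (1 - q u - q v))
      = 1 - 2*(\<Sum>u\<in>U. p j u * q u) - (\<Sum>u\<in>U. (p j u)^2 * (1 - 2*q u))" if j: "j \<in> J" for j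
  proof -
    have s1: "sum (p j) U = 1" using p j by auto
    have a: "(\<Sum>u\<in>U. \<Sum>v\<in>U. p j u * p j v * (1 - q u - q v))
        = (\<Sum>u\<in>U. p j u * (1 - q u) - p j u * (\<Sum>v\<in>U. p j v * q v))"
    proof (rule sum.cong[OF refl])
      fix u assume "u \<in> U"
      have "(\<Sum>v\<in>U. p j u * p j v * (1 - q u - q v))
          = (\<Sum>v\<in>U. (p j u * (1 - q u)) * p j v - p j u * (p j v * q v))"
        by (rule sum.cong) (auto simp: algebra_simps)
      also have "\<dots> = p j u * (1 - q u) * sum (p j) U - p j u * (\<Sum>v\<in>U. p j v * q v)"
        by (simp add: sum_subtractf sum_distrib_left)
      finally show "(\<Sum>v\<in>U. p j u * p j v * (1 - q u - q v)) = p j u * (1 - q u) - p j u * (\<Sum>v\<in>U. p j v * q v)"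
        using s1 by simp
    qed
    also have "\<dots> = sum (p j) U - (\<Sum>u\<in>U. p j u * q u) - sum (p j) U * (\<Sum>v\<in>U. p j v * q v)"
      by (simp add: sum_subtractf sum.distrib sum_distrib_right algebra_simps)
    finally have a': "(\<Sum>u\<in>U. \<Sum>v\<in>U. p j u * p j v * (1 - q u - q v)) = 1 - 2*(\<Sum>u\<in>U. p j u * q u)"
      using s1 by simp
    have b: "(\<Sum>u\<in>U. p j u * p j u * (1 - q u - q u)) = (\<Sum>u\<in>U. (p j u)^2 * (1 - 2*q u))"
      by (rule sum.cong) (auto simp: power2_eq_square)
    show ?thesis using sum_offdiag[OF U(1), of "\<lambda>u v. p j u * p j v * (1 - q u - q v)"] a' b by simp
  qed
  have s_eq: "(\<Sum>j\<in>J. w j * (p j u)^2) = (q u)^2 + V u" for u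
  proof -
    have "V u = (\<Sum>j\<in>J. w j * (p j u)^2 - 2 * q u * (w j * p j u) + (q u)^2 * w j)"
      unfolding V_def by (rule sum.cong) (auto simp: power2_eq_square algebra_simps)
    also have "\<dots> = (\<Sum>j\<in>J. w j * (p j u)^2) - 2 * q u * q u + (q u)^2 * sum w J"
      by (simp add: sum.distrib sum_subtractf sum_distrib_left q_def)
    finally show ?thesis using w by (simp add: power2_eq_square)
  qed
  have G_eq: "(\<Sum>j\<in>J. w j * (\<Sum>u\<in>U. \<Sum>v\<in>U. if u = v then 0 else p j u * p j v * (1 - q u - q v)))
      = E3 - (\<Sum>u\<in>U. V u * (1 - 2 * q u))"
  proof -
    have "(\<Sum>j\<in>J. w j * (\<Sum>u\<in>U. \<Sum>v\<in>U. if u = v then 0 else p j u * p j v * (1 - q u - q v)))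
        = (\<Sum>j\<in>J. w j - 2*(\<Sum>u\<in>U. q u * (w j * p j u)) - (\<Sum>u\<in>U. (1 - 2*q u) * (w j * (p j u)^2)))"
      by (rule sum.cong[OF refl], subst inner) (auto simp: algebra_simps sum_distrib_left sum_subtractf)
    also have "\<dots> = sum w J - 2*(\<Sum>u\<in>U. q u * q u) - (\<Sum>u\<in>U. (1 - 2*q u) * (\<Sum>j\<in>J. w j * (p j u)^2))"
    proof -
      have e1: "(\<Sum>j\<in>J. \<Sum>u\<in>U. q u * (w j * p j u)) = (\<Sum>u\<in>U. q u * q u)"
        by (subst sum.swap) (simp add: sum_distrib_left q_def)
      have e2: "(\<Sum>j\<in>J. \<Sum>u\<in>U. (1 - 2*q u) * (w j * (p j u)^2)) = (\<Sum>u\<in>U. (1 - 2*q u) * (\<Sum>j\<in>J. w j * (p j u)^2))"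
        by (subst sum.swap) (simp add: sum_distrib_left)
      show ?thesis by (simp add: sum_subtractf e1 e2 sum_distrib_left[symmetric])
    qed
    also have "\<dots> = 1 - 2*(\<Sum>u\<in>U. q u * q u) - (\<Sum>u\<in>U. (1 - 2*q u) * ((q u)^2 + V u))"
      using w by (simp add: s_eq)
    also have "\<dots> = E3 - (\<Sum>u\<in>U. V u * (1 - 2 * q u))"
    proof -
      have "(\<Sum>u\<in>U. 2*(q u * q u) + (1 - 2*q u) * ((q u)^2 + V u))
          = (\<Sum>u\<in>U. (3*(q u)^2 - 2*(q u)^3) + V u * (1 - 2*q u))"
        by (rule sum.cong) (auto simp: algebra_simps power2_eq_square power3_eq_cube)
      then have "(\<Sum>u\<in>U. 2*(q u * q u)) + (\<Sum>u\<in>U. (1 - 2*q u) * ((q u)^2 + V u))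
          = (\<Sum>u\<in>U. 3*(q u)^2 - 2*(q u)^3) + (\<Sum>u\<in>U. V u * (1 - 2*q u))"
        by (simp add: sum.distrib)
      then show ?thesis unfolding E3_def by (simp add: sum_distrib_left[symmetric])
    qed
    finally show ?thesis .
  qed
  have goal: "E3 - (\<Sum>u\<in>U. V u * (1 - 2 * q u)) \<le> (B - 1) * (B - 2) / B^2"
  proof (cases "\<forall>u\<in>U. q u \<le> 1/2")
    case True
    have S0: "0 \<le> (\<Sum>u\<in>U. V u * (1 - 2 * q u))" using True Vnn by (auto intro!: sum_nonneg)
    have T: "B * (3*(1/B)^2 - 2*(1/B)^3) \<le> (\<Sum>u\<in>U. 3*(q u)^2 - 2*(q u)^3)"
    proof -
      have iB: "1/B \<le> 1/4" using B4 by (simp add: field_simps)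
      have "\<forall>u\<in>U. 2 * q u + 4*(1/B) \<le> 3"
      proof
        fix u assume "u \<in> U"
        with q1 have "q u \<le> 1" by auto
        with iB show "2 * q u + 4*(1/B) \<le> 3" by linarith
      qed
      moreover have "sum q U = real (card U) * (1/B)" using qsum B4 unfolding B_def by simp
      ultimately show ?thesis using sum_tangent_phi[OF U(1), of q "1/B"] unfolding B_def by simp
    qed
    have "1 - B * (3*(1/B)^2 - 2*(1/B)^3) = (B-1)*(B-2)/B^2" using B4
      by (simp add: field_simps power2_eq_square power3_eq_cube; simp add: algebra_simps)
    then have "E3 \<le> (B-1)*(B-2)/B^2" using T unfolding E3_def by linarith
    then show ?thesis using S0 by linarith
  next
    case False
    then obtain u0 where u0: "u0 \<in> U" "q u0 > 1/2" by auto
    define t where "t = 1 - q u0"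
    define U' where "U' = U - {u0}"
    have fU': "finite U'" unfolding U'_def using U by simp
    have cardU': "real (card U') = B - 1" unfolding U'_def B_def using u0 U by (simp add: of_nat_diff)
    have sumU': "sum q U' = t" unfolding U'_def t_def using qsum u0 U by (simp add: sum_diff1)
    have qU': "\<forall>u\<in>U'. 0 \<le> q u \<and> q u \<le> t"
    proof
      fix u assume u: "u \<in> U'"
      have "q u \<le> sum q U'" by (rule member_le_sum) (use u qnn fU' in \<open>auto simp: U'_def\<close>)
      then show "0 \<le> q u \<and> q u \<le> t" using sumU' qnn u unfolding U'_def by auto
    qed
    have t: "0 \<le> t" "t < 1/2" using q1 u0 unfolding t_def by auto
    have split: "(\<Sum>u\<in>U. V u * (1 - 2*q u)) = V u0 * (2*t - 1) + (\<Sum>u\<in>U'. V u * (1 - 2*q u))"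
      unfolding U'_def t_def using u0 U by (simp add: sum.remove)
    have low: "(1 - 2*t) * sum V U' \<le> (\<Sum>u\<in>U'. V u * (1 - 2*q u))"
      unfolding sum_distrib_left
    proof (rule sum_mono)
      fix u assume "u \<in> U'"
      then have "q u \<le> t" using qU' by auto
      then have "V u * q u \<le> V u * t" using Vnn by (intro mult_left_mono) auto
      then show "(1 - 2*t) * V u \<le> V u * (1 - 2*q u)" by (simp add: algebra_simps)
    qed
    have V0cs: "V u0 \<le> (B - 1) * sum V U'"
    proof -
      have d: "(p j u0 - q u0)^2 \<le> (\<Sum>u\<in>U'. (p j u - q u)^2) * (B - 1)" if j: "j \<in> J" for j
      proof -
        have "sum (p j) U - sum q U = 0" using p j qsum by simp
        then have "(\<Sum>u\<in>U. p j u - q u) = 0" by (simp add: sum_subtractf)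
        then have "(p j u0 - q u0) + (\<Sum>u\<in>U'. p j u - q u) = 0"
          unfolding U'_def using u0 U by (simp add: sum.remove)
        then have h: "(\<Sum>u\<in>U'. p j u - q u) = -(p j u0 - q u0)" by linarith
        have "(p j u0 - q u0)^2 = (\<Sum>u\<in>U'. p j u - q u)^2"
          by (simp only: h power2_minus)
        also have "\<dots> \<le> (\<Sum>u\<in>U'. (p j u - q u)^2) * real (card U')"
          by (rule sum_squared_le_sum_of_squares)
        finally show ?thesis using cardU' by simp
      qed
      have "V u0 \<le> (\<Sum>j\<in>J. w j * ((\<Sum>u\<in>U'. (p j u - q u)^2) * (B - 1)))"
        unfolding V_def by (rule sum_mono) (use d w in \<open>auto intro!: mult_left_mono\<close>)
      also have "\<dots> = (B - 1) * (\<Sum>u\<in>U'. \<Sum>j\<in>J. w j * (p j u - q u)^2)"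
      proof -
        have "(\<Sum>j\<in>J. w j * ((\<Sum>u\<in>U'. (p j u - q u)^2) * (B - 1)))
            = (B - 1) * (\<Sum>j\<in>J. \<Sum>u\<in>U'. w j * (p j u - q u)^2)"
          by (simp add: sum_distrib_left mult_ac)
        also have "(\<Sum>j\<in>J. \<Sum>u\<in>U'. w j * (p j u - q u)^2) = (\<Sum>u\<in>U'. \<Sum>j\<in>J. w j * (p j u - q u)^2)"
          by (rule sum.swap)
        finally show ?thesis .
      qed
      finally show ?thesis unfolding V_def .
    qed
    have V0le: "V u0 \<le> t*(1-t)"
    proof -
      have "(\<Sum>j\<in>J. w j * (p j u0)^2) \<le> (\<Sum>j\<in>J. w j * p j u0)"
      proof (rule sum_mono)
        fix j assume j: "j \<in> J"
        have "p j u0 * p j u0 \<le> p j u0 * 1" using p p1 j u0 by (intro mult_left_mono) auto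
        then show "w j * (p j u0)^2 \<le> w j * p j u0" using w j by (intro mult_left_mono) (auto simp: power2_eq_square)
      qed
      then show ?thesis using s_eq[of u0] unfolding t_def q_def by (simp add: power2_eq_square algebra_simps)
    qed
    have E3le: "E3 \<le> 1 - (3*(1-t)^2 - 2*(1-t)^3) - (B-1)*(3*(t/(B-1))^2 - 2*(t/(B-1))^3)"
    proof -
      have "\<forall>u\<in>U'. 2 * q u + 4*(t/(B-1)) \<le> 3"
      proof
        fix u assume "u \<in> U'"
        then have "q u \<le> t" using qU' by auto
        moreover have "t/(B-1) \<le> 1/2" using t B4 by (simp add: field_simps)
        ultimately show "2 * q u + 4*(t/(B-1)) \<le> 3" using t by linarith
      qed
      moreover have "sum q U' = real (card U') * (t/(B-1))" using sumU' cardU' B4 by simp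
      ultimately have "real (card U') * (3*(t/(B-1))^2 - 2*(t/(B-1))^3) \<le> (\<Sum>u\<in>U'. 3*(q u)^2 - 2*(q u)^3)"
        using sum_tangent_phi[OF fU', of q "t/(B-1)"] by simp
      moreover have "(\<Sum>u\<in>U. 3*(q u)^2 - 2*(q u)^3) = (3*(q u0)^2 - 2*(q u0)^3) + (\<Sum>u\<in>U'. 3*(q u)^2 - 2*(q u)^3)"
        unfolding U'_def using u0 U by (simp add: sum.remove)
      moreover have "q u0 = 1 - t" unfolding t_def by simp
      ultimately show ?thesis unfolding E3_def using cardU' by simp
    qed
    have Vpart: "- ((1-2*t)*(B-2)/(B-1) * (t*(1-t))) \<le> (\<Sum>u\<in>U. V u * (1 - 2*q u))"
    proof -
      have "(1-2*t) * (V u0 / (B-1)) \<le> (1-2*t) * sum V U'"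
        using V0cs B4 t by (intro mult_left_mono) (auto simp: field_simps)
      moreover have "(1-2*t) * V u0 * ((B-2)/(B-1)) = (1-2*t) * V u0 - (1-2*t) * (V u0 / (B-1))"
        using B4 by (simp add: field_simps)
      moreover have "V u0 * (2*t - 1) = - ((1-2*t) * V u0)" by (simp add: algebra_simps)
      ultimately have "- ((1-2*t) * V u0 * ((B-2)/(B-1))) \<le> (\<Sum>u\<in>U. V u * (1 - 2*q u))"
        using split low by linarith
      moreover have "(1-2*t) * V u0 * ((B-2)/(B-1)) \<le> (1-2*t)*(B-2)/(B-1) * (t*(1-t))"
      proof -
        have K: "0 \<le> (1-2*t)*((B-2)/(B-1))" using t B4 by simp
        have "(1-2*t)*((B-2)/(B-1)) * V u0 \<le> (1-2*t)*((B-2)/(B-1)) * (t*(1-t))"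
          using V0le K by (rule mult_left_mono)
        then show ?thesis by (simp add: mult_ac)
      qed
      ultimately show ?thesis by linarith
    qed
    have poly: "1 - (3*(1-t)^2 - 2*(1-t)^3) - (B-1)*(3*(t/(B-1))^2 - 2*(t/(B-1))^3)
        + (1-2*t)*(B-2)/(B-1) * (t*(1-t)) = (B-2)/(B-1)*t - 2*t^3*(B-2)/(B-1)^2"
    proof -
      have gen: "1 - (3*(1-t)^2 - 2*(1-t)^3) - D*(3*(t/D)^2 - 2*(t/D)^3) + (1-2*t)*(D-1)/D*(t*(1-t))
          = (D-1)/D*t - 2*t^3*(D-1)/D^2" if D: "D \<noteq> 0" for D :: real
      proof -
        define a where "a = 1/D"
        have r: "1 - (3*(1-t)^2 - 2*(1-t)^3) - (3*t^2*a - 2*t^3*a^2) + (1-2*t)*(1-a)*(t*(1-t))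
            = (1-a)*t - 2*t^3*(a - a^2)"
          by (simp add: algebra_simps power2_eq_square power3_eq_cube)
        have e1: "D*(3*(t/D)^2 - 2*(t/D)^3) = 3*t^2*a - 2*t^3*a^2" unfolding a_def using D
          by (simp add: power2_eq_square power3_eq_cube field_simps)
        have e2: "(1-2*t)*(D-1)/D*(t*(1-t)) = (1-2*t)*(1-a)*(t*(1-t))" unfolding a_def using D
          by (simp add: field_simps)
        have e3: "(D-1)/D*t = (1-a)*t" unfolding a_def using D by (simp add: field_simps)
        have e4: "2*t^3*(D-1)/D^2 = 2*t^3*(a - a^2)" unfolding a_def using D
          by (simp add: field_simps power2_eq_square)
        show ?thesis using r e1 e2 e3 e4 by simp
      qed
      have "B - 1 \<noteq> 0" using B4 by simp
      from gen[OF this] show ?thesis by (simp add: algebra_simps)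
    qed
    have "(B-2)/(B-1)*t - 2*t^3*(B-2)/(B-1)^2 \<le> (B-2)/(B-1)*(1/2)"
    proof -
      have "0 \<le> 2*t^3*(B-2)/(B-1)^2" using t B4 by simp
      moreover have "(B-2)/(B-1)*t \<le> (B-2)/(B-1)*(1/2)" using t B4 by (intro mult_left_mono) auto
      ultimately show ?thesis by linarith
    qed
    also have "\<dots> \<le> (B-1)*(B-2)/B^2"
    proof -
      have "B*4 \<le> B*B" using B4 by (intro mult_left_mono) auto
      then have "B^2 \<le> 2*(B-1)^2" by (simp add: power2_eq_square algebra_simps)
      then have "B^2 * (B-2) \<le> 2*(B-1)^2 * (B-2)" using B4 by (intro mult_right_mono) auto
      then show ?thesis using B4 by (simp add: field_simps power2_eq_square)
    qed
    finally show ?thesis using E3le Vpart poly by linarith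
  qed
  show ?thesis using G_eq goal unfolding q_def B_def by simp
qed

lemma choose_top:
  fixes f :: "'a \<Rightarrow> real"
  assumes "finite A" "s \<le> card A" "\<forall>a\<in>A. 0 \<le> f a"
  shows "\<exists>V\<subseteq>A. card V = s \<and> real s * sum f A \<le> real (card A) * sum f V"
  using assms
proof (induction "card A - s" arbitrary: A)
  case 0
  then have "card A = s" by simp
  then show ?case by (intro exI[of _ A]) auto
next
  case (Suc n)
  then have cA: "card A > s" by simp
  then have ne: "A \<noteq> {}" by auto
  have "Min (f ` A) \<in> f ` A" by (rule Min_in) (use Suc.prems(1) ne in auto)
  then obtain a where a: "a \<in> A" "f a = Min (f ` A)" by (metis imageE)
  have amin: "\<forall>b\<in>A. f a \<le> f b" using a Suc.prems(1) by auto
  define A' where "A' = A - {a}"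
  have fA': "finite A'" using Suc.prems(1) unfolding A'_def by simp
  have cA': "card A' = card A - 1" unfolding A'_def using a Suc.prems(1) by simp
  have "n = card A' - s" using Suc.hyps(2) cA' by simp
  moreover have "s \<le> card A'" using cA cA' by simp
  moreover have "\<forall>a\<in>A'. 0 \<le> f a" using Suc.prems(3) unfolding A'_def by auto
  ultimately obtain V where V: "V \<subseteq> A'" "card V = s" "real s * sum f A' \<le> real (card A') * sum f V"
    using Suc.hyps(1) fA' by blast
  have fV: "finite V" using V(1) fA' finite_subset by blast
  have "(\<Sum>b\<in>V. f a) \<le> sum f V" by (rule sum_mono) (use V(1) amin in \<open>auto simp: A'_def\<close>)
  then have sv: "real s * f a \<le> sum f V" using V(2) by simp
  have sA: "sum f A = f a + sum f A'" unfolding A'_def using a Suc.prems(1) by (simp add: sum.remove)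
  have rc: "real (card A') = real (card A) - 1" using cA' cA by (simp add: of_nat_diff)
  have "real s * sum f A = real s * sum f A' + real s * f a" using sA by (simp add: algebra_simps)
  also have "\<dots> \<le> (real (card A) - 1) * sum f V + sum f V" using V(3) sv rc by simp
  also have "\<dots> = real (card A) * sum f V" by (simp add: algebra_simps)
  finally show ?case using V(1,2) unfolding A'_def by blast
qed

definition actv :: "nat list \<Rightarrow> nat list \<Rightarrow> nat \<Rightarrow> nat list \<Rightarrow> bool" where
  "actv x y i z \<longleftrightarrow> x!i \<noteq> y!i \<and> z!i \<noteq> x!i \<and> z!i \<noteq> y!i"

lemma card_insert_filter:
  assumes "finite I" "j \<notin> I"
  shows "card {i\<in>insert j I. P i} = (if P j then Suc (card {i\<in>I. P i}) else card {i\<in>I. P i})"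
proof -
  have "{i\<in>insert j I. P i} = (if P j then insert j {i\<in>I. P i} else {i\<in>I. P i})" by auto
  then show ?thesis using assms by simp
qed

lemma kraft:
  fixes b k :: nat and x y :: "nat list" and D :: "nat list set" and I :: "nat set"
  assumes fI: "finite I" and fD: "finite D" and k: "4 \<le> k" "k \<le> b"
   and rng: "\<forall>i\<in>I. x!i \<in> {1..b} \<and> y!i \<in> {1..b} \<and> (\<forall>z\<in>D. z!i \<in> {1..b})"
   and good: "\<forall>S\<subseteq>D. card S = k-2 \<longrightarrow> (\<exists>i\<in>I. (\<forall>z\<in>S. actv x y i z) \<and> inj_on (\<lambda>z. z!i) S)"
  shows "(\<Sum>z\<in>D. (real (k-3) / real (b-2))^(card {i\<in>I. actv x y i z})) \<le> real (k-3)"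
  using fI fD rng good
proof (induction I arbitrary: D rule: finite_induct)
  case empty
  have "\<not> (k - 2 \<le> card D)"
  proof
    assume "k - 2 \<le> card D"
    then obtain S where "S \<subseteq> D" "card S = k-2" by (meson obtain_subset_with_card_n)
    then show False using empty.prems(3) by auto
  qed
  then show ?case by simp
next
  case (insert j I)
  define r where "r = real (k-3) / real (b-2)"
  have r01: "0 \<le> r" "r \<le> 1" unfolding r_def using k by auto
  show ?case
  proof (cases "x!j = y!j")
    case True
    then have na: "\<And>z. \<not> actv x y j z" unfolding actv_def by auto
    have eq: "\<And>z. card {i\<in>insert j I. actv x y i z} = card {i\<in>I. actv x y i z}"
      using card_insert_filter[OF insert.hyps(1,2)] na by simp
    have "(\<Sum>z\<in>D. (real (k-3) / real (b-2))^(card {i\<in>I. actv x y i z})) \<le> real (k-3)"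
    proof (rule insert.IH[OF insert.prems(1)])
      show "\<forall>i\<in>I. x!i \<in> {1..b} \<and> y!i \<in> {1..b} \<and> (\<forall>z\<in>D. z!i \<in> {1..b})" using insert.prems(2) by auto
      show "\<forall>S\<subseteq>D. card S = k-2 \<longrightarrow> (\<exists>i\<in>I. (\<forall>z\<in>S. actv x y i z) \<and> inj_on (\<lambda>z. z!i) S)"
      proof (intro allI impI)
        fix S assume S: "S \<subseteq> D" "card S = k-2"
        then obtain i where i: "i \<in> insert j I" "\<forall>z\<in>S. actv x y i z" "inj_on (\<lambda>z. z!i) S"
          using insert.prems(3) by blast
        have "S \<noteq> {}" using S k by auto
        then have "i \<noteq> j" using i(2) na by auto
        then show "\<exists>i\<in>I. (\<forall>z\<in>S. actv x y i z) \<and> inj_on (\<lambda>z. z!i) S" using i by auto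
      qed
    qed
    then show ?thesis using eq unfolding r_def by simp
  next
    case False
    define A where "A = {1..b} - {x!j, y!j}"
    have xyj: "x!j \<in> {1..b}" "y!j \<in> {1..b}" using insert.prems(2) by auto
    have cardA: "card A = b - 2" unfolding A_def using xyj False by (simp add: card_Diff_subset)
    define g where "g z = r^(card {i\<in>I. actv x y i z})" for z
    define D1 where "D1 = {z\<in>D. actv x y j z}"
    define D0 where "D0 = {z\<in>D. \<not> actv x y j z}"
    define W where "W v = sum g {z\<in>D1. z!j = v}" for v
    have fD1: "finite D1" "finite D0" unfolding D1_def D0_def using insert.prems(1) by auto
    have gnn: "\<forall>z. 0 \<le> g z" unfolding g_def using r01 by auto
    have Wnn: "\<forall>v\<in>A. 0 \<le> W v" unfolding W_def using gnn by (auto intro!: sum_nonneg)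
    have "k - 3 \<le> card A" using cardA k by simp
    then obtain V where V: "V \<subseteq> A" "card V = k-3" "real (k-3) * sum W A \<le> real (card A) * sum W V"
      using choose_top[of A "k-3" W] Wnn unfolding A_def by auto
    have fA: "finite A" unfolding A_def by simp
    have fV: "finite V" using V(1) fA finite_subset by blast
    define DV where "DV = {z\<in>D. \<not> actv x y j z \<or> z!j \<in> V}"
    have fDV: "finite DV" unfolding DV_def using insert.prems(1) by auto
    have IHV0: "(\<Sum>z\<in>DV. (real (k-3) / real (b-2))^(card {i\<in>I. actv x y i z})) \<le> real (k-3)"
    proof (rule insert.IH[OF fDV])
      show "\<forall>i\<in>I. x!i \<in> {1..b} \<and> y!i \<in> {1..b} \<and> (\<forall>z\<in>DV. z!i \<in> {1..b})"
        using insert.prems(2) unfolding DV_def by auto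
      show "\<forall>S\<subseteq>DV. card S = k-2 \<longrightarrow> (\<exists>i\<in>I. (\<forall>z\<in>S. actv x y i z) \<and> inj_on (\<lambda>z. z!i) S)"
      proof (intro allI impI)
        fix S assume S: "S \<subseteq> DV" "card S = k-2"
        then have "S \<subseteq> D" unfolding DV_def by auto
        then obtain i where i: "i \<in> insert j I" "\<forall>z\<in>S. actv x y i z" "inj_on (\<lambda>z. z!i) S"
          using insert.prems(3) S by blast
        have "i \<noteq> j"
        proof
          assume ij: "i = j"
          then have "(\<lambda>z. z!j) ` S \<subseteq> V" using i(2) S unfolding DV_def by auto
          then have "card S \<le> card V" using card_inj_on_le[of "\<lambda>z. z!j" S V] i(3) ij fV by auto
          then show False using S V(2) k by simp
        qed
        then show "\<exists>i\<in>I. (\<forall>z\<in>S. actv x y i z) \<and> inj_on (\<lambda>z. z!i) S" using i by auto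
      qed
    qed
    have IHV: "(\<Sum>z\<in>DV. g z) \<le> real (k-3)" using IHV0 unfolding g_def r_def .
    have splitD: "sum g DV = sum g D0 + sum W V"
    proof -
      have "DV = D0 \<union> {z\<in>D1. z!j \<in> V}" unfolding DV_def D0_def D1_def by auto
      moreover have "D0 \<inter> {z\<in>D1. z!j \<in> V} = {}" unfolding D0_def D1_def by auto
      ultimately have "sum g DV = sum g D0 + sum g {z\<in>D1. z!j \<in> V}"
        using fD1 by (simp add: sum.union_disjoint)
      moreover have "sum g {z\<in>D1. z!j \<in> V} = sum W V"
      proof -
        have "sum g {z\<in>D1. z!j \<in> V} = (\<Sum>v\<in>V. sum g {z\<in>{z\<in>D1. z!j \<in> V}. z!j = v})"
          by (rule sum.group[symmetric]) (use fD1 fV in auto)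
        also have "\<dots> = sum W V" unfolding W_def
        proof (rule sum.cong[OF refl])
          fix v assume "v \<in> V"
          then have "{z\<in>{z\<in>D1. z!j \<in> V}. z!j = v} = {z\<in>D1. z!j = v}" by auto
          then show "sum g {z\<in>{z\<in>D1. z!j \<in> V}. z!j = v} = sum g {z\<in>D1. z!j = v}" by simp
        qed
        finally show ?thesis .
      qed
      ultimately show ?thesis by simp
    qed
    have sumD1: "sum g D1 = sum W A"
    proof -
      have "(\<lambda>z. z!j) ` D1 \<subseteq> A" unfolding D1_def A_def actv_def using insert.prems(2) by auto
      then show ?thesis unfolding W_def by (rule sum.group[symmetric, OF fD1(1) fA])
    qed
    have "(\<Sum>z\<in>D. r^(card {i\<in>insert j I. actv x y i z})) = sum g D0 + (\<Sum>z\<in>D1. r * g z)"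
    proof -
      have "(\<Sum>z\<in>D. r^(card {i\<in>insert j I. actv x y i z}))
          = (\<Sum>z\<in>D \<inter> {z. actv x y j z}. r^(card {i\<in>insert j I. actv x y i z}))
            + (\<Sum>z\<in>D - {z. actv x y j z}. r^(card {i\<in>insert j I. actv x y i z}))"
        by (rule sum.Int_Diff) (use insert.prems(1) in auto)
      moreover have "D \<inter> {z. actv x y j z} = D1" "D - {z. actv x y j z} = D0"
        unfolding D1_def D0_def by auto
      moreover have "(\<Sum>z\<in>D1. r^(card {i\<in>insert j I. actv x y i z})) = (\<Sum>z\<in>D1. r * g z)"
      proof (rule sum.cong[OF refl])
        fix z assume "z \<in> D1"
        then have "actv x y j z" unfolding D1_def by auto
        then have "card {i\<in>insert j I. actv x y i z} = Suc (card {i\<in>I. actv x y i z})"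
          using card_insert_filter[OF insert.hyps(1,2), of "\<lambda>i. actv x y i z"] by simp
        then show "r^(card {i\<in>insert j I. actv x y i z}) = r * g z" unfolding g_def by simp
      qed
      moreover have "(\<Sum>z\<in>D0. r^(card {i\<in>insert j I. actv x y i z})) = sum g D0"
      proof (rule sum.cong[OF refl])
        fix z assume "z \<in> D0"
        then have "\<not> actv x y j z" unfolding D0_def by auto
        then have "card {i\<in>insert j I. actv x y i z} = card {i\<in>I. actv x y i z}"
          using card_insert_filter[OF insert.hyps(1,2), of "\<lambda>i. actv x y i z"] by simp
        then show "r^(card {i\<in>insert j I. actv x y i z}) = g z" unfolding g_def by simp
      qed
      ultimately show ?thesis by simp
    qed
    also have "\<dots> = sum g D0 + r * sum W A" using sumD1 by (simp add: sum_distrib_left[symmetric])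
    also have "\<dots> \<le> sum g D0 + sum W V"
    proof -
      have "r * sum W A = real (k-3) * sum W A / real (b-2)" unfolding r_def by simp
      also have "\<dots> \<le> real (card A) * sum W V / real (b-2)" using V(3) by (simp add: divide_right_mono)
      also have "\<dots> = sum W V" using cardA k by simp
      finally show ?thesis by simp
    qed
    also have "\<dots> \<le> real (k-3)" using IHV splitD by simp
    finally show ?thesis unfolding r_def .
  qed
qed

lemma G_count:
  fixes U :: "'u set" and J :: "'j set" and cnt :: "'j \<Rightarrow> 'u \<Rightarrow> real"
  assumes U: "finite U" "4 \<le> card U" and J: "finite J"
    and cnn: "\<forall>j\<in>J. \<forall>u\<in>U. 0 \<le> cnt j u" and Npos: "\<forall>j\<in>J. 0 < sum (cnt j) U"
  shows "(\<Sum>j\<in>J. (\<Sum>u\<in>U. \<Sum>v\<in>U. if u = v then 0 else cnt j u * cnt j v *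
            ((\<Sum>l\<in>J. sum (cnt l) U) - (\<Sum>l\<in>J. cnt l u) - (\<Sum>l\<in>J. cnt l v))) / sum (cnt j) U)
     \<le> (real (card U) - 1) * (real (card U) - 2) / (real (card U))^2 * (\<Sum>l\<in>J. sum (cnt l) U)^2"
proof (cases "J = {}")
  case True then show ?thesis by simp
next
  case False
  define N where "N j = sum (cnt j) U" for j
  define M where "M = (\<Sum>l\<in>J. N l)"
  define CU where "CU u = (\<Sum>l\<in>J. cnt l u)" for u
  have Mpos: "0 < M" unfolding M_def using False J Npos N_def by (intro sum_pos) auto
  define w where "w j = N j / M" for j
  define p where "p j u = cnt j u / N j" for j u
  have w: "\<forall>j\<in>J. 0 \<le> w j" "sum w J = 1"
    using Npos Mpos unfolding w_def N_def M_def by (auto simp: sum_divide_distrib[symmetric] less_imp_le)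
  have p: "\<forall>j\<in>J. \<forall>u\<in>U. 0 \<le> p j u" "\<forall>j\<in>J. sum (p j) U = 1"
    using cnn Npos unfolding p_def N_def by (auto simp: sum_divide_distrib[symmetric])
  have q: "(\<Sum>l\<in>J. w l * p l u) = CU u / M" for u
  proof -
    have "(\<Sum>l\<in>J. w l * p l u) = (\<Sum>l\<in>J. cnt l u / M)"
      by (rule sum.cong) (use Npos in \<open>auto simp: w_def p_def N_def\<close>)
    then show ?thesis unfolding CU_def by (simp add: sum_divide_distrib)
  qed
  have trm: "w j * (\<Sum>u\<in>U. \<Sum>v\<in>U. if u = v then 0 else p j u * p j v * (1 - CU u / M - CU v / M))
     = (\<Sum>u\<in>U. \<Sum>v\<in>U. if u = v then 0 else cnt j u * cnt j v * (M - CU u - CU v)) / N j / M^2"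
    if j: "j \<in> J" for j
  proof -
    have Nj: "N j > 0" using Npos j N_def by auto
    have "w j * (\<Sum>u\<in>U. \<Sum>v\<in>U. if u = v then 0 else p j u * p j v * (1 - CU u / M - CU v / M))
        = (\<Sum>u\<in>U. \<Sum>v\<in>U. w j * (if u = v then 0 else p j u * p j v * (1 - CU u / M - CU v / M)))"
      by (simp add: sum_distrib_left)
    also have "\<dots> = (\<Sum>u\<in>U. \<Sum>v\<in>U. (if u = v then 0 else cnt j u * cnt j v * (M - CU u - CU v)) / N j / M^2)"
      by (intro sum.cong refl) (use Nj Mpos in \<open>auto simp: w_def p_def field_simps power2_eq_square\<close>)
    also have "\<dots> = (\<Sum>u\<in>U. \<Sum>v\<in>U. if u = v then 0 else cnt j u * cnt j v * (M - CU u - CU v)) / N j / M^2"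
      by (simp add: sum_divide_distrib)
    finally show ?thesis .
  qed
  have "(\<Sum>j\<in>J. w j * (\<Sum>u\<in>U. \<Sum>v\<in>U. if u = v then 0 else p j u * p j v * (1 - (\<Sum>l\<in>J. w l * p l u) - (\<Sum>l\<in>J. w l * p l v))))
         \<le> (real (card U) - 1) * (real (card U) - 2) / (real (card U))^2"
    by (rule G_bound[OF U J w p])
  then have A: "(\<Sum>j\<in>J. w j * (\<Sum>u\<in>U. \<Sum>v\<in>U. if u = v then 0 else p j u * p j v * (1 - CU u / M - CU v / M)))
         \<le> (real (card U) - 1) * (real (card U) - 2) / (real (card U))^2"
    unfolding q .
  have B: "(\<Sum>j\<in>J. w j * (\<Sum>u\<in>U. \<Sum>v\<in>U. if u = v then 0 else p j u * p j v * (1 - CU u / M - CU v / M)))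
     = (\<Sum>j\<in>J. (\<Sum>u\<in>U. \<Sum>v\<in>U. if u = v then 0 else cnt j u * cnt j v * (M - CU u - CU v)) / N j / M^2)"
    by (rule sum.cong[OF refl]) (rule trm)
  have "(\<Sum>j\<in>J. (\<Sum>u\<in>U. \<Sum>v\<in>U. if u = v then 0 else cnt j u * cnt j v * (M - CU u - CU v)) / N j / M^2)
         \<le> (real (card U) - 1) * (real (card U) - 2) / (real (card U))^2"
    using A B by simp
  then have "(\<Sum>j\<in>J. (\<Sum>u\<in>U. \<Sum>v\<in>U. if u = v then 0 else cnt j u * cnt j v * (M - CU u - CU v)) / N j) / M^2
         \<le> (real (card U) - 1) * (real (card U) - 2) / (real (card U))^2"
    by (simp add: sum_divide_distrib)
  then show ?thesis using Mpos unfolding M_def CU_def N_def by (simp add: divide_le_eq)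
qed

lemma sum_by_value:
  fixes f :: "'b \<Rightarrow> real"
  assumes "finite S" "finite U" "h ` S \<subseteq> U"
  shows "(\<Sum>x\<in>S. f (h x)) = (\<Sum>u\<in>U. real (card {x\<in>S. h x = u}) * f u)"
proof -
  have "(\<Sum>x\<in>S. f (h x)) = (\<Sum>u\<in>U. \<Sum>x\<in>{x\<in>S. h x = u}. f (h x))"
    by (rule sum.group[symmetric]) (use assms in auto)
  also have "\<dots> = (\<Sum>u\<in>U. real (card {x\<in>S. h x = u}) * f u)"
  proof (rule sum.cong[OF refl])
    fix u assume "u \<in> U"
    have "(\<Sum>x\<in>{x\<in>S. h x = u}. f (h x)) = (\<Sum>x\<in>{x\<in>S. h x = u}. f u)" by (rule sum.cong) auto
    then show "(\<Sum>x\<in>{x\<in>S. h x = u}. f (h x)) = real (card {x\<in>S. h x = u}) * f u" by simp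
  qed
  finally show ?thesis .
qed

lemma jensen_pow:
  fixes r :: real and a :: "'a \<Rightarrow> nat"
  assumes "finite X" "X \<noteq> {}" "0 < r"
  shows "real (card X) * r powr ((\<Sum>z\<in>X. real (a z)) / real (card X)) \<le> (\<Sum>z\<in>X. r ^ a z)"
proof -
  define N where "N = real (card X)"
  have N: "N > 0" unfolding N_def using assms by (simp add: card_gt_0_iff)
  define y0 where "y0 = (\<Sum>z\<in>X. real (a z)) / N * ln r"
  have "(\<Sum>z\<in>X. exp y0 * (1 + (real (a z) * ln r - y0))) \<le> (\<Sum>z\<in>X. r ^ a z)"
  proof (rule sum_mono)
    fix z assume "z \<in> X"
    have "exp y0 * (1 + (real (a z) * ln r - y0)) \<le> exp y0 * exp (real (a z) * ln r - y0)"
      by (intro mult_left_mono exp_ge_add_one_self) auto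
    also have "\<dots> = exp (real (a z) * ln r)" by (simp add: exp_diff)
    also have "\<dots> = r ^ a z" using assms(3) by (simp add: exp_of_nat_mult)
    finally show "exp y0 * (1 + (real (a z) * ln r - y0)) \<le> r ^ a z" .
  qed
  moreover have "(\<Sum>z\<in>X. exp y0 * (1 + (real (a z) * ln r - y0))) = exp y0 * (N + (\<Sum>z\<in>X. real (a z)) * ln r - N * y0)"
    unfolding N_def by (simp add: sum_distrib_left[symmetric] sum.distrib sum_subtractf sum_distrib_right)
  moreover have "N + (\<Sum>z\<in>X. real (a z)) * ln r - N * y0 = N" unfolding y0_def using N by simp
  moreover have "r powr ((\<Sum>z\<in>X. real (a z)) / N) = exp y0" unfolding y0_def powr_def using assms(3) by simp
  ultimately show ?thesis unfolding N_def by (simp add: mult.commute)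
qed

lemma words_alt: "words b n = {xs. set xs \<subseteq> {1..b} \<and> length xs = n}"
  unfolding words_def by auto

lemma finite_words: "finite (words b n)"
  unfolding words_alt by (rule finite_lists_length_eq) simp

lemma card_words: "card (words b n) = b^n"
  unfolding words_alt by (subst card_lists_length_eq) auto

lemma words_nth: "z \<in> words b n \<Longrightarrow> i < n \<Longrightarrow> z!i \<in> {1..b}"
  unfolding words_def by (auto dest: nth_mem)

lemma sum_indic: "finite A \<Longrightarrow> (\<Sum>z\<in>A. if P z then 1 else 0) = real (card {z\<in>A. P z})"
  by (simp add: sum.inter_filter[symmetric])

lemma inner_count:
  fixes C :: "nat list set"
  assumes fC: "finite C"
  shows "(\<Sum>z\<in>C. if actv x y i z then 1 else 0) =
     (if x!i = y!i then 0 else real (card C) - real (card {z\<in>C. z!i = x!i}) - real (card {z\<in>C. z!i = y!i}))"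
proof (cases "x!i = y!i")
  case True then show ?thesis unfolding actv_def by simp
next
  case False
  have "(\<Sum>z\<in>C. if actv x y i z then 1 else (0::real))
      = (\<Sum>z\<in>C. 1 - (if z!i = x!i then 1 else 0) - (if z!i = y!i then 1 else 0))"
    by (rule sum.cong) (use False in \<open>auto simp: actv_def\<close>)
  also have "\<dots> = real (card C) - real (card {z\<in>C. z!i = x!i}) - real (card {z\<in>C. z!i = y!i})"
    by (simp add: sum_subtractf sum_indic[OF fC])
  finally show ?thesis using False by simp
qed

lemma Q_bound:
  fixes C :: "nat list set" and m i n b :: nat
  assumes fC: "finite C" and W: "C \<subseteq> words b n" and i: "i < n" and b4: "4 \<le> b"
  shows "(\<Sum>x\<in>C. \<Sum>y\<in>{y\<in>C. take m y = take m x}. (\<Sum>z\<in>C. if actv x y i z then 1 else 0)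
            / real (card {y\<in>C. take m y = take m x}))
         \<le> (real b - 1)*(real b - 2)/(real b)^2 * (real (card C))^2"
proof -
  define J where "J = (\<lambda>z. take m z) ` C"
  define cls where "cls j = {y\<in>C. take m y = j}" for j
  define cnt where "cnt j u = real (card {z\<in>cls j. z!i = u})" for j u
  define Cu where "Cu u = real (card {z\<in>C. z!i = u})" for u
  define M where "M = real (card C)"
  define U where "U = {1..b}"
  define Hh where "Hh u v = (if u = v then 0 else M - Cu u - Cu v)" for u v
  have fU: "finite U" unfolding U_def by simp
  have cU: "card U = b" unfolding U_def by simp
  have fJ: "finite J" unfolding J_def using fC by simp
  have fcls: "\<And>j. finite (cls j)" unfolding cls_def using fC by simp
  have vals: "\<forall>z\<in>C. z!i \<in> U" using W i words_nth unfolding U_def by blast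
  have Nj: "sum (cnt j) U = real (card (cls j))" for j
  proof -
    have "(\<Sum>x\<in>cls j. (\<lambda>_. 1::real) (x!i)) = (\<Sum>u\<in>U. real (card {x\<in>cls j. x!i = u}) * 1)"
      by (rule sum_by_value) (use fcls fU vals in \<open>auto simp: cls_def\<close>)
    then show ?thesis unfolding cnt_def by simp
  qed
  have Npos: "\<forall>j\<in>J. 0 < sum (cnt j) U"
    unfolding Nj J_def cls_def using fC by (auto simp: card_gt_0_iff)
  have Mj: "(\<Sum>l\<in>J. sum (cnt l) U) = M"
  proof -
    have "(\<Sum>l\<in>J. sum (\<lambda>_. 1::real) {x\<in>C. take m x = l}) = sum (\<lambda>_. 1) C"
      by (rule sum.group) (use fC fJ in \<open>auto simp: J_def\<close>)
    then show ?thesis unfolding Nj M_def cls_def by simp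
  qed
  have CUj: "(\<Sum>l\<in>J. cnt l u) = Cu u" for u
  proof -
    have "(\<Sum>l\<in>J. sum (\<lambda>_. 1::real) {x\<in>{z\<in>C. z!i = u}. take m x = l}) = sum (\<lambda>_. 1) {z\<in>C. z!i = u}"
      by (rule sum.group) (use fC fJ in \<open>auto simp: J_def\<close>)
    moreover have "\<And>l. {x\<in>{z\<in>C. z!i = u}. take m x = l} = {z\<in>cls l. z!i = u}" unfolding cls_def by auto
    ultimately show ?thesis unfolding cnt_def Cu_def by simp
  qed
  have inner: "\<And>x y. (\<Sum>z\<in>C. if actv x y i z then 1 else 0) = Hh (x!i) (y!i)"
    unfolding Hh_def Cu_def M_def using inner_count[OF fC] by simp
  have "(\<Sum>x\<in>C. \<Sum>y\<in>{y\<in>C. take m y = take m x}. (\<Sum>z\<in>C. if actv x y i z then 1 else 0)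
            / real (card {y\<in>C. take m y = take m x}))
      = (\<Sum>j\<in>J. \<Sum>x\<in>{x\<in>C. take m x = j}. \<Sum>y\<in>{y\<in>C. take m y = take m x}. (\<Sum>z\<in>C. if actv x y i z then 1 else 0)
            / real (card {y\<in>C. take m y = take m x}))"
    by (rule sum.group[symmetric]) (use fC fJ in \<open>auto simp: J_def\<close>)
  also have "\<dots> = (\<Sum>j\<in>J. (\<Sum>x\<in>cls j. \<Sum>y\<in>cls j. Hh (x!i) (y!i)) / real (card (cls j)))"
  proof (rule sum.cong[OF refl])
    fix j assume "j \<in> J"
    have "(\<Sum>x\<in>{x\<in>C. take m x = j}. \<Sum>y\<in>{y\<in>C. take m y = take m x}. (\<Sum>z\<in>C. if actv x y i z then 1 else 0)
            / real (card {y\<in>C. take m y = take m x}))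
        = (\<Sum>x\<in>cls j. \<Sum>y\<in>cls j. Hh (x!i) (y!i) / real (card (cls j)))"
      unfolding cls_def inner by (rule sum.cong) auto
    also have "\<dots> = (\<Sum>x\<in>cls j. \<Sum>y\<in>cls j. Hh (x!i) (y!i)) / real (card (cls j))"
      by (simp add: sum_divide_distrib)
    finally show "(\<Sum>x\<in>{x\<in>C. take m x = j}. \<Sum>y\<in>{y\<in>C. take m y = take m x}. (\<Sum>z\<in>C. if actv x y i z then 1 else 0)
            / real (card {y\<in>C. take m y = take m x}))
        = (\<Sum>x\<in>cls j. \<Sum>y\<in>cls j. Hh (x!i) (y!i)) / real (card (cls j))" .
  qed
  also have "\<dots> = (\<Sum>j\<in>J. (\<Sum>u\<in>U. \<Sum>v\<in>U. if u = v then 0 else cnt j u * cnt j v *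
            ((\<Sum>l\<in>J. sum (cnt l) U) - (\<Sum>l\<in>J. cnt l u) - (\<Sum>l\<in>J. cnt l v))) / sum (cnt j) U)"
  proof (rule sum.cong[OF refl])
    fix j assume "j \<in> J"
    have cv: "(\<lambda>z. z!i) ` cls j \<subseteq> U" using vals unfolding cls_def by auto
    have "(\<Sum>x\<in>cls j. \<Sum>y\<in>cls j. Hh (x!i) (y!i)) = (\<Sum>x\<in>cls j. \<Sum>v\<in>U. cnt j v * Hh (x!i) v)"
    proof (rule sum.cong[OF refl])
      fix x assume "x \<in> cls j"
      show "(\<Sum>y\<in>cls j. Hh (x!i) (y!i)) = (\<Sum>v\<in>U. cnt j v * Hh (x!i) v)"
        unfolding cnt_def by (rule sum_by_value[OF fcls fU cv])
    qed
    also have "\<dots> = (\<Sum>u\<in>U. cnt j u * (\<Sum>v\<in>U. cnt j v * Hh u v))"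
      unfolding cnt_def by (rule sum_by_value[OF fcls fU cv])
    also have "\<dots> = (\<Sum>u\<in>U. \<Sum>v\<in>U. if u = v then 0 else cnt j u * cnt j v *
            ((\<Sum>l\<in>J. sum (cnt l) U) - (\<Sum>l\<in>J. cnt l u) - (\<Sum>l\<in>J. cnt l v)))"
      unfolding Mj CUj Hh_def by (simp add: sum_distrib_left) (intro sum.cong refl, simp)
    finally show "(\<Sum>x\<in>cls j. \<Sum>y\<in>cls j. Hh (x!i) (y!i)) / real (card (cls j)) =
        (\<Sum>u\<in>U. \<Sum>v\<in>U. if u = v then 0 else cnt j u * cnt j v *
            ((\<Sum>l\<in>J. sum (cnt l) U) - (\<Sum>l\<in>J. cnt l u) - (\<Sum>l\<in>J. cnt l v))) / sum (cnt j) U"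
      unfolding Nj by simp
  qed
  also have "\<dots> \<le> (real (card U) - 1) * (real (card U) - 2) / (real (card U))^2 * (\<Sum>l\<in>J. sum (cnt l) U)^2"
    by (rule G_count[OF fU _ fJ _ Npos]) (auto simp: cU b4 cnt_def)
  also have "\<dots> = (real b - 1)*(real b - 2)/(real b)^2 * (real (card C))^2"
    unfolding Mj M_def cU by simp
  finally show ?thesis .
qed


lemma key:
  fixes b k n m :: nat and C :: "nat list set"
  assumes hc: "hash_code b k n C" and k: "4 \<le> k" "k \<le> b" and mn: "m \<le> n"
    and big: "real b ^ m < real (card C)"
  shows "log 2 (real (card C) / real (k-1)) \<le> log 2 (real (b-2) / real (k-3))
      * ((real b - 1)*(real b - 2)/(real b)^2) * real (n - m) * (real (card C) / (real (card C) - real b ^ m))"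
proof -
  have W: "C \<subseteq> words b n" and hs: "\<forall>S. S \<subseteq> C \<and> card S = k \<longrightarrow> (\<exists>i<n. inj_on (\<lambda>x. x!i) S)"
    using hc unfolding hash_code_def by auto
  have fC: "finite C" using W finite_words finite_subset by blast
  define M where "M = real (card C)"
  have Mpos: "M > 0" unfolding M_def using big by (smt (verit) zero_le_power of_nat_0_le_iff)
  define c where "c = (real b - 1)*(real b - 2)/(real b)^2"
  have c0: "c \<ge> 0" unfolding c_def using k by auto
  define I where "I = {m..<n}"
  have fI: "finite I" unfolding I_def by simp
  define cls where "cls x = {y\<in>C. take m y = take m x}" for x
  define act where "act x y z = card {i\<in>I. actv x y i z}" for x y z
  define F where "F x y = (\<Sum>z\<in>C. real (act x y z))" for x y
  define J where "J = (\<lambda>z. take m z) ` C"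
  have fJ: "finite J" unfolding J_def using fC by simp
  have cardJ: "real (card J) \<le> real b ^ m"
  proof -
    have "J \<subseteq> words b m"
    proof
      fix j assume "j \<in> J"
      then obtain z where z: "z \<in> C" "j = take m z" unfolding J_def by auto
      then have "length z = n" "set z \<subseteq> {1..b}" using W unfolding words_def by auto
      then show "j \<in> words b m" using z mn set_take_subset[of m z] unfolding words_def by auto
    qed
    then have "card J \<le> b^m" using card_mono[OF finite_words] card_words by metis
    then show ?thesis by (metis of_nat_le_iff of_nat_power)
  qed
  have MJ: "M - real (card J) > 0" using cardJ big unfolding M_def by simp
  have fcls: "\<And>x. finite (cls x)" unfolding cls_def using fC by simp
  have xcls: "\<And>x. x \<in> C \<Longrightarrow> x \<in> cls x" unfolding cls_def by simp
  have Npos: "\<And>x. x \<in> C \<Longrightarrow> real (card (cls x)) > 0" using xcls fcls by (auto simp: card_gt_0_iff)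
  have Fdef2: "F x y = (\<Sum>i\<in>I. \<Sum>z\<in>C. if actv x y i z then 1 else 0)" for x y
  proof -
    have "F x y = (\<Sum>z\<in>C. \<Sum>i\<in>I. if actv x y i z then 1 else 0)"
      unfolding F_def act_def by (rule sum.cong) (simp_all add: sum_indic[OF fI])
    then show ?thesis by (simp add: sum.swap[of _ C])
  qed
  have sumF: "(\<Sum>x\<in>C. \<Sum>y\<in>cls x. F x y / real (card (cls x))) \<le> real (n-m) * (c * M^2)"
  proof -
    have "(\<Sum>x\<in>C. \<Sum>y\<in>cls x. F x y / real (card (cls x)))
        = (\<Sum>x\<in>C. \<Sum>y\<in>cls x. \<Sum>i\<in>I. (\<Sum>z\<in>C. if actv x y i z then 1 else 0) / real (card (cls x)))"
      unfolding Fdef2 by (simp add: sum_divide_distrib)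
    also have "\<dots> = (\<Sum>x\<in>C. \<Sum>i\<in>I. \<Sum>y\<in>cls x. (\<Sum>z\<in>C. if actv x y i z then 1 else 0) / real (card (cls x)))"
      by (rule sum.cong[OF refl]) (rule sum.swap)
    also have "\<dots> = (\<Sum>i\<in>I. \<Sum>x\<in>C. \<Sum>y\<in>cls x. (\<Sum>z\<in>C. if actv x y i z then 1 else 0) / real (card (cls x)))"
      by (rule sum.swap)
    also have "\<dots> \<le> (\<Sum>i\<in>I. c * M^2)"
    proof (rule sum_mono)
      fix i assume "i \<in> I"
      then have "i < n" unfolding I_def by simp
      from Q_bound[OF fC W this, of m] k
      show "(\<Sum>x\<in>C. \<Sum>y\<in>cls x. (\<Sum>z\<in>C. if actv x y i z then 1 else 0) / real (card (cls x))) \<le> c * M^2"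
        unfolding cls_def c_def M_def by simp
    qed
    also have "\<dots> = real (n-m) * (c * M^2)" unfolding I_def by simp
    finally show ?thesis .
  qed
  have wsum: "(\<Sum>x\<in>C. \<Sum>y\<in>cls x - {x}. 1 / real (card (cls x))) = M - real (card J)"
  proof -
    have "(\<Sum>x\<in>C. \<Sum>y\<in>cls x - {x}. 1 / real (card (cls x))) = (\<Sum>x\<in>C. 1 - 1 / real (card (cls x)))"
    proof (rule sum.cong[OF refl])
      fix x assume x: "x \<in> C"
      have "card (cls x - {x}) = card (cls x) - 1" using xcls[OF x] fcls by simp
      then have "real (card (cls x - {x})) = real (card (cls x)) - 1" using Npos[OF x] by simp
      then show "(\<Sum>y\<in>cls x - {x}. 1 / real (card (cls x))) = 1 - 1 / real (card (cls x))"
        using Npos[OF x] by (simp add: field_simps)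
    qed
    also have "\<dots> = M - (\<Sum>x\<in>C. 1 / real (card (cls x)))" unfolding M_def by (simp add: sum_subtractf)
    also have "(\<Sum>x\<in>C. 1 / real (card (cls x))) = real (card J)"
    proof -
      have "(\<Sum>x\<in>C. 1 / real (card (cls x))) = (\<Sum>j\<in>J. \<Sum>x\<in>{x\<in>C. take m x = j}. 1 / real (card (cls x)))"
        by (rule sum.group[symmetric]) (use fC fJ in \<open>auto simp: J_def\<close>)
      also have "\<dots> = (\<Sum>j\<in>J. 1)"
      proof (rule sum.cong[OF refl])
        fix j assume j: "j \<in> J"
        have "(\<Sum>x\<in>{x\<in>C. take m x = j}. 1 / real (card (cls x))) = (\<Sum>x\<in>{x\<in>C. take m x = j}. 1 / real (card {x\<in>C. take m x = j}))"
          by (rule sum.cong) (auto simp: cls_def)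
        also have "\<dots> = 1" using j fC unfolding J_def by (auto simp: card_gt_0_iff)
        finally show "(\<Sum>x\<in>{x\<in>C. take m x = j}. 1 / real (card (cls x))) = 1" .
      qed
      finally show ?thesis by simp
    qed
    finally show ?thesis .
  qed
  have Fxx: "F x x = 0" for x unfolding F_def act_def actv_def by simp
  have sumF': "(\<Sum>x\<in>C. \<Sum>y\<in>cls x - {x}. F x y / real (card (cls x))) \<le> real (n-m) * (c * M^2)"
  proof -
    have "(\<Sum>x\<in>C. \<Sum>y\<in>cls x - {x}. F x y / real (card (cls x))) = (\<Sum>x\<in>C. \<Sum>y\<in>cls x. F x y / real (card (cls x)))"
    proof (rule sum.cong[OF refl])
      fix x assume "x \<in> C"
      then have "x \<in> cls x" by (rule xcls)
      from sum.remove[OF fcls this, of "\<lambda>y. F x y / real (card (cls x))"]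
      show "(\<Sum>y\<in>cls x - {x}. F x y / real (card (cls x))) = (\<Sum>y\<in>cls x. F x y / real (card (cls x)))"
        using Fxx by simp
    qed
    then show ?thesis using sumF by simp
  qed
  define B where "B = real (n-m) * (c * M^2) / (M - real (card J))"
  obtain x y where xy: "x \<in> C" "y \<in> C" "x \<noteq> y" "take m x = take m y" "F x y \<le> B"
  proof (rule ccontr)
    assume "\<not> thesis"
    then have gt: "\<forall>x\<in>C. \<forall>y\<in>cls x - {x}. B < F x y" using that unfolding cls_def by force
    have "\<exists>x0\<in>C. cls x0 - {x0} \<noteq> {}"
    proof (rule ccontr)
      assume "\<not> (\<exists>x0\<in>C. cls x0 - {x0} \<noteq> {})"
      then have e: "\<forall>x\<in>C. cls x - {x} = {}" by blast
      have "(\<Sum>x\<in>C. \<Sum>y\<in>cls x - {x}. 1 / real (card (cls x))) = 0"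
      proof (rule sum.neutral, rule ballI)
        fix x assume "x \<in> C"
        with e have "cls x - {x} = {}" by blast
        then show "(\<Sum>y\<in>cls x - {x}. 1 / real (card (cls x))) = 0" by (simp only: sum.empty)
      qed
      then show False using wsum MJ by simp
    qed
    then obtain x0 where x0: "x0 \<in> C" "cls x0 - {x0} \<noteq> {}" by blast
    have "(\<Sum>x\<in>C. \<Sum>y\<in>cls x - {x}. B / real (card (cls x))) < (\<Sum>x\<in>C. \<Sum>y\<in>cls x - {x}. F x y / real (card (cls x)))"
    proof (rule sum_strict_mono_ex1[OF fC])
      show "\<forall>x\<in>C. (\<Sum>y\<in>cls x - {x}. B / real (card (cls x))) \<le> (\<Sum>y\<in>cls x - {x}. F x y / real (card (cls x)))"
      proof (intro ballI sum_mono)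
        fix x y assume x: "x \<in> C" and y: "y \<in> cls x - {x}"
        have "B \<le> F x y" using gt x y by (auto intro: less_imp_le)
        then show "B / real (card (cls x)) \<le> F x y / real (card (cls x))" by (rule divide_right_mono) simp
      qed
      show "\<exists>a\<in>C. (\<Sum>y\<in>cls a - {a}. B / real (card (cls a))) < (\<Sum>y\<in>cls a - {a}. F a y / real (card (cls a)))"
        using x0 gt Npos fcls by (intro bexI[of _ x0] sum_strict_mono) (auto intro!: divide_strict_right_mono)
    qed
    also have "\<dots> \<le> real (n-m) * (c * M^2)" by (rule sumF')
    also have "real (n-m) * (c * M^2) = B * (M - real (card J))" unfolding B_def using MJ by simp
    also have "\<dots> = (\<Sum>x\<in>C. \<Sum>y\<in>cls x - {x}. B / real (card (cls x)))"
      unfolding wsum[symmetric] sum_distrib_left by (rule sum.cong[OF refl]) simp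
    finally show False by simp
  qed
  define D where "D = C - {x, y}"
  have fD: "finite D" unfolding D_def using fC by simp
  have rng: "\<forall>i\<in>I. x!i \<in> {1..b} \<and> y!i \<in> {1..b} \<and> (\<forall>z\<in>D. z!i \<in> {1..b})"
  proof (rule ballI)
    fix i assume "i \<in> I"
    then have i: "i < n" unfolding I_def by simp
    have 1: "x!i \<in> {1..b}" using words_nth[OF subsetD[OF W xy(1)] i] .
    have 2: "y!i \<in> {1..b}" using words_nth[OF subsetD[OF W xy(2)] i] .
    have "\<forall>z\<in>D. z!i \<in> {1..b}"
    proof
      fix z assume "z \<in> D"
      then have "z \<in> C" unfolding D_def by simp
      show "z!i \<in> {1..b}" using words_nth[OF subsetD[OF W \<open>z \<in> C\<close>] i] .
    qed
    with 1 2 show "x!i \<in> {1..b} \<and> y!i \<in> {1..b} \<and> (\<forall>z\<in>D. z!i \<in> {1..b})" by simp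
  qed
  have good: "\<forall>S\<subseteq>D. card S = k-2 \<longrightarrow> (\<exists>i\<in>I. (\<forall>z\<in>S. actv x y i z) \<and> inj_on (\<lambda>z. z!i) S)"
  proof (intro allI impI)
    fix S assume S: "S \<subseteq> D" "card S = k-2"
    have fS: "finite S" using S(1) fD finite_subset by blast
    define S' where "S' = insert x (insert y S)"
    have "x \<notin> S" "y \<notin> S" using S(1) unfolding D_def by auto
    then have "card S' = k" unfolding S'_def using fS xy(3) S(2) k by simp
    moreover have "S' \<subseteq> C" unfolding S'_def using S(1) xy unfolding D_def by auto
    ultimately obtain i where i: "i < n" "inj_on (\<lambda>x. x!i) S'" using hs by blast
    have xyi: "x!i \<noteq> y!i"
    proof
      assume "x!i = y!i"
      moreover have "x \<in> S'" "y \<in> S'" unfolding S'_def by auto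
      ultimately have "x = y" using inj_onD[OF i(2)] by metis
      then show False using xy(3) by simp
    qed
    have "m \<le> i"
    proof (rule ccontr)
      assume "\<not> m \<le> i"
      then have "x!i = y!i" using xy(4) by (metis not_le nth_take)
      then show False using xyi by simp
    qed
    then have iI: "i \<in> I" unfolding I_def using i by simp
    have "\<forall>z\<in>S. actv x y i z"
    proof
      fix z assume z: "z \<in> S"
      then have "z \<noteq> x" "z \<noteq> y" using S(1) unfolding D_def by auto
      moreover have "z \<in> S'" "x \<in> S'" "y \<in> S'" using z unfolding S'_def by auto
      ultimately have "z!i \<noteq> x!i" "z!i \<noteq> y!i" using inj_onD[OF i(2)] by metis+
      then show "actv x y i z" using xyi unfolding actv_def by simp
    qed
    moreover have "inj_on (\<lambda>z. z!i) S" using i(2) unfolding S'_def by (rule inj_on_subset) auto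
    ultimately show "\<exists>i\<in>I. (\<forall>z\<in>S. actv x y i z) \<and> inj_on (\<lambda>z. z!i) S" using iI by blast
  qed
  define r where "r = real (k-3) / real (b-2)"
  have kr: "(\<Sum>z\<in>D. r ^ act x y z) \<le> real (k-3)"
    unfolding r_def act_def by (rule kraft[OF fI fD k rng good])
  have act0: "act x y x = 0" "act x y y = 0" unfolding act_def actv_def by simp_all
  have sumC: "(\<Sum>z\<in>C. r ^ act x y z) \<le> real (k-1)"
  proof -
    have CD: "C = insert x (insert y D)" unfolding D_def using xy by auto
    have nx: "x \<notin> insert y D" "y \<notin> D" unfolding D_def using xy(3) by auto
    have "(\<Sum>z\<in>C. r ^ act x y z) = (\<Sum>z\<in>insert x (insert y D). r ^ act x y z)" using CD by simp
    also have "\<dots> = r ^ act x y x + (r ^ act x y y + (\<Sum>z\<in>D. r ^ act x y z))"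
      using fD nx by simp
    finally have "(\<Sum>z\<in>C. r ^ act x y z) = r ^ act x y x + (r ^ act x y y + (\<Sum>z\<in>D. r ^ act x y z))" .
    then show ?thesis using kr act0 k by simp
  qed
  have rpos: "r > 0" unfolding r_def using k by simp
  have Cne: "C \<noteq> {}" using xy by auto
  have jen: "M * r powr (F x y / M) \<le> real (k-1)"
    using jensen_pow[OF fC Cne rpos, of "act x y"] sumC unfolding M_def F_def by simp
  define lam where "lam = log 2 (real (b-2) / real (k-3))"
  have lam0: "lam \<ge> 0" unfolding lam_def using k by simp
  have logr: "log 2 r = - lam" unfolding lam_def r_def using k by (simp add: log_divide)
  have "log 2 (M * r powr (F x y / M)) \<le> log 2 (real (k-1))"
  proof -
    have pos: "0 < M * r powr (F x y / M)" using Mpos rpos by simp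
    have "0 < real (k-1)" using k by simp
    then show ?thesis using log_le_cancel_iff[of 2 "M * r powr (F x y / M)" "real (k-1)"] pos jen by simp
  qed
  moreover have "log 2 (M * r powr (F x y / M)) = log 2 M - lam * (F x y / M)"
    using Mpos rpos logr by (simp add: log_mult log_powr)
  ultimately have L1: "log 2 (M / real (k-1)) \<le> lam * (F x y / M)"
    using Mpos k by (simp add: log_divide)
  have "F x y / M \<le> B / M" using xy(5) Mpos by (simp add: divide_right_mono)
  also have "B / M = real (n-m) * c * (M / (M - real (card J)))"
    unfolding B_def using Mpos MJ by (simp add: field_simps power2_eq_square)
  also have "\<dots> \<le> real (n-m) * c * (M / (M - real b ^ m))"
  proof -
    have "M - real b ^ m > 0" using big unfolding M_def by simp
    then have "M / (M - real (card J)) \<le> M / (M - real b ^ m)"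
      using Mpos cardJ MJ by (intro divide_left_mono) (auto intro!: mult_pos_pos)
    then show ?thesis using c0 by (intro mult_left_mono) auto
  qed
  finally have "lam * (F x y / M) \<le> lam * (real (n-m) * c * (M / (M - real b ^ m)))"
    using lam0 by (intro mult_left_mono)
  with L1 show ?thesis unfolding lam_def c_def M_def by (simp add: mult_ac)
qed

lemma A_hash_attained:
  assumes "4 \<le> k"
  shows "\<exists>C. hash_code b k n C \<and> card C = A_hash b k n"
proof -
  define S where "S = {card C | C. hash_code b k n C}"
  have "S \<subseteq> {0..b^n}"
  proof
    fix s assume "s \<in> S"
    then obtain C where C: "hash_code b k n C" "s = card C" unfolding S_def by auto
    then have "card C \<le> card (words b n)" using finite_words unfolding hash_code_def by (auto intro: card_mono)
    then show "s \<in> {0..b^n}" using C card_words by simp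
  qed
  then have fS: "finite S" using finite_subset by blast
  have "hash_code b k n {}" unfolding hash_code_def using assms by auto
  then have "S \<noteq> {}" unfolding S_def by auto
  then have "Max S \<in> S" using fS by simp
  then show ?thesis unfolding S_def A_hash_def by auto
qed

lemma A_hash_le:
  assumes "hash_code b k n C" shows "real (card C) \<le> real b ^ n"
proof -
  have "card C \<le> card (words b n)" using assms finite_words unfolding hash_code_def by (auto intro: card_mono)
  then show ?thesis using card_words by (metis of_nat_le_iff of_nat_power)
qed

lemma aux_div: "(n::real) > 0 \<Longrightarrow> (t * (n + p) + q) / n = t * (1 + p/n) + q/n"
  by (simp add: field_simps)

theorem lemma1:
  fixes b k :: nat
  assumes "4 \<le> k" and "k \<le> b"
  shows "R_hash b k \<le> ereal (inverse (1 / log 2 (real b)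
     + (real b)^2 / (((real b)^2 - 3 * real b + 2) * log 2 ((real b - 2) / (real k - 3)))))"
proof -
  have k: "4 \<le> k" "k \<le> b" by fact+
  define \<beta> where "\<beta> = log 2 (real b)"
  define lam where "lam = log 2 ((real b - 2) / (real k - 3))"
  define c where "c = (real b - 1)*(real b - 2)/(real b)^2"
  define a where "a = lam * c"
  define \<rho> where "\<rho> = inverse (1/\<beta> + 1/a)"
  have bpos: "\<beta> > 0" unfolding \<beta>_def using k by simp
  have lampos: "lam > 0" unfolding lam_def using k by simp
  have cpos: "c > 0" unfolding c_def using k by simp
  have apos: "a > 0" unfolding a_def using lampos cpos by simp
  have lam': "log 2 (real (b-2) / real (k-3)) = lam" unfolding lam_def using k by (simp add: of_nat_diff)
  have target: "inverse (1 / log 2 (real b) + (real b)^2 / (((real b)^2 - 3 * real b + 2) * log 2 ((real b - 2) / (real k - 3)))) = \<rho>"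
  proof -
    have "(real b)^2 - 3 * real b + 2 = (real b - 1)*(real b - 2)" by (simp add: algebra_simps power2_eq_square)
    then have "(real b)^2 / (((real b)^2 - 3 * real b + 2) * lam) = 1 / a"
      unfolding a_def c_def using k lampos by (simp add: field_simps)
    then show ?thesis unfolding \<rho>_def \<beta>_def lam_def by simp
  qed
  define g where "g n = sqrt (real n)" for n :: nat
  define \<theta> where "\<theta> n = a / (1 - 2 powr (- g n))" for n
  define S where "S n = (\<theta> n * (1 + (1 + g n / \<beta>) / real n) + log 2 (real (k-1)) / real n) / (1 + \<theta> n / \<beta>)" for n
  define u where "u n = max (g n / real n) (S n)" for n
  have bound: "log 2 (real (A_hash b k n)) / real n \<le> u n" if n: "n \<ge> 1" for n
  proof -
    obtain C where C: "hash_code b k n C" "card C = A_hash b k n" using A_hash_attained[OF k(1)] by blast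
    define M where "M = real (card C)"
    define L where "L = log 2 M"
    have Mle: "M \<le> real b ^ n" unfolding M_def using A_hash_le[OF C(1)] .
    have npos: "real n > 0" using n by simp
    have gpos: "g n \<ge> 1" unfolding g_def using n by simp
    show ?thesis
    proof (cases "L < g n")
      case True
      then have "L / real n \<le> g n / real n" using npos by (simp add: divide_right_mono)
      then show ?thesis unfolding u_def L_def M_def C(2) by simp
    next
      case False
      then have Lg: "g n \<le> L" by simp
      have Mpos: "M > 0"
      proof (rule ccontr)
        assume "\<not> M > 0"
        then have "M = 0" unfolding M_def by simp
        then have "L = 0" unfolding L_def by (simp add: log_def)
        then show False using Lg gpos by simp
      qed
      have M2L: "M = 2 powr L" unfolding L_def using Mpos by simp
      define m where "m = nat \<lfloor>(L - g n) / \<beta>\<rfloor>"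
      have q0: "(L - g n) / \<beta> \<ge> 0" using Lg bpos by simp
      have mfl: "real m \<le> (L - g n) / \<beta>" "(L - g n) / \<beta> < real m + 1"
      proof -
        have "real m = of_int \<lfloor>(L - g n) / \<beta>\<rfloor>" unfolding m_def using q0 by simp
        then show "real m \<le> (L - g n) / \<beta>" "(L - g n) / \<beta> < real m + 1" by linarith+
      qed
      have mb: "real m * \<beta> \<le> L - g n" using mfl(1) bpos by (simp add: field_simps)
      have bm: "real b ^ m = 2 powr (real m * \<beta>)"
      proof -
        have b2: "2 powr \<beta> = real b" unfolding \<beta>_def using k by simp
        have "real b ^ m = real b powr real m" using k by (simp add: powr_realpow)
        also have "\<dots> = (2 powr \<beta>) powr real m" using b2 by simp
        also have "\<dots> = 2 powr (real m * \<beta>)" by (simp add: powr_powr mult.commute)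
        finally show ?thesis .
      qed
      define e where "e = 2 powr (- g n)"
      have "(2::real) powr (- g n) < 2 powr 0" using gpos by (intro powr_less_mono) auto
      then have e01: "0 < e" "e < 1" unfolding e_def by auto
      have bmle: "real b ^ m \<le> M * e"
      proof -
        have "real b ^ m \<le> 2 powr (L - g n)" unfolding bm using mb by simp
        also have "\<dots> = M * e" unfolding e_def M2L by (simp add: powr_add[symmetric])
        finally show ?thesis .
      qed
      have "M * e < M * 1" by (rule mult_strict_left_mono) (use e01 Mpos in auto)
      then have big: "real b ^ m < real (card C)" using bmle unfolding M_def by linarith
      have Ln: "L \<le> real n * \<beta>"
      proof -
        have "L \<le> log 2 (real b ^ n)" unfolding L_def using Mpos Mle by (intro log_mono) auto
        also have "\<dots> = real n * \<beta>" unfolding \<beta>_def by (simp add: log_nat_power)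
        finally show ?thesis .
      qed
      have mn: "m \<le> n"
      proof -
        have "(L - g n) / \<beta> \<le> L / \<beta>" using gpos bpos by (intro divide_right_mono) auto
        then have "real m \<le> L / \<beta>" using mfl(1) by linarith
        also have "\<dots> \<le> real n" using Ln bpos by (simp add: field_simps)
        finally show ?thesis by simp
      qed
      have K: "log 2 (M / real (k-1)) \<le> lam * c * real (n - m) * (M / (M - real b ^ m))"
        using key[OF C(1) k mn big] unfolding lam' c_def M_def by simp
      have frac: "M / (M - real b ^ m) \<le> 1 / (1 - e)"
      proof -
        have "M * (1 - e) \<le> M - real b ^ m" using bmle by (simp add: algebra_simps)
        moreover have "M * (1 - e) > 0" using Mpos e01 by simp
        ultimately have "M / (M - real b ^ m) \<le> M / (M * (1 - e))"
          using Mpos by (intro divide_left_mono) auto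
        also have "\<dots> = 1 / (1 - e)" using Mpos by simp
        finally show ?thesis .
      qed
      have nm: "real (n - m) \<le> real n + 1 + g n / \<beta> - L / \<beta>"
        using mfl(2) mn bpos by (simp add: of_nat_diff diff_divide_distrib)
      have "lam * c * real (n - m) * (M / (M - real b ^ m)) \<le> a * real (n - m) * (1 / (1 - e))"
        unfolding a_def using frac lampos cpos by (intro mult_left_mono) auto
      also have "\<dots> \<le> a * (real n + 1 + g n / \<beta> - L / \<beta>) * (1 / (1 - e))"
        using nm apos e01 by (intro mult_right_mono mult_left_mono) auto
      also have "\<dots> = \<theta> n * (real n + 1 + g n / \<beta>) - \<theta> n * L / \<beta>"
      proof -
        have th_e: "\<theta> n = a * (1 / (1 - e))" unfolding \<theta>_def e_def by simp
        show ?thesis unfolding th_e by (simp add: divide_inverse algebra_simps)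
      qed
      finally have "log 2 (M / real (k-1)) \<le> \<theta> n * (real n + 1 + g n / \<beta>) - \<theta> n * L / \<beta>"
        using K by linarith
      moreover have "log 2 (M / real (k-1)) = L - log 2 (real (k-1))"
        unfolding L_def using Mpos k by (simp add: log_divide)
      ultimately have ineq: "L * (1 + \<theta> n / \<beta>) \<le> \<theta> n * (real n + 1 + g n / \<beta>) + log 2 (real (k-1))"
        by (simp add: algebra_simps)
      have thpos: "\<theta> n > 0" unfolding \<theta>_def using apos e01 e_def by simp
      have "\<theta> n / \<beta> > 0" using thpos bpos by (rule divide_pos_pos)
      then have Y: "1 + \<theta> n / \<beta> > 0" by linarith
      define X where "X = \<theta> n * (real n + (1 + g n / \<beta>)) + log 2 (real (k-1))"
      define Yv where "Yv = 1 + \<theta> n / \<beta>"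
      have ineq': "L * Yv \<le> X" using ineq unfolding X_def Yv_def by (simp add: add.assoc)
      have "L \<le> X / Yv" using ineq' Y unfolding Yv_def by (simp add: pos_le_divide_eq)
      then have "L / real n \<le> X / Yv / real n" by (rule divide_right_mono) (use npos in simp)
      also have "X / Yv / real n = (X / real n) / Yv" by simp
      also have "X / real n = \<theta> n * (1 + (1 + g n / \<beta>) / real n) + log 2 (real (k-1)) / real n"
        unfolding X_def using aux_div[OF npos] by blast
      finally have "L / real n \<le> S n" unfolding S_def Yv_def .
      then show ?thesis unfolding u_def L_def M_def C(2) by simp
    qed
  qed
  have lim: "u \<longlonglongrightarrow> \<rho>"
  proof -
    have g1: "(\<lambda>n. g n / real n) \<longlonglongrightarrow> 0" unfolding g_def by real_asymp
    have e0: "(\<lambda>n. 2 powr (- g n)) \<longlonglongrightarrow> 0" unfolding g_def by real_asymp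
    have th: "\<theta> \<longlonglongrightarrow> a / (1 - 0)" unfolding \<theta>_def by (intro tendsto_intros e0) simp
    have g2: "(\<lambda>n. (1 + g n / \<beta>) / real n) \<longlonglongrightarrow> 0 + 0 / \<beta>"
    proof -
      have "(\<lambda>n. 1 / real n + (g n / real n) / \<beta>) \<longlonglongrightarrow> 0 + 0 / \<beta>"
        by (intro tendsto_intros g1 lim_const_over_n) (use bpos in auto)
      moreover have "(\<lambda>n. 1 / real n + (g n / real n) / \<beta>) = (\<lambda>n. (1 + g n / \<beta>) / real n)"
        by (rule ext) (simp add: field_simps add_divide_distrib)
      ultimately show ?thesis by simp
    qed
    have "a / \<beta> > 0" using apos bpos by (rule divide_pos_pos)
    then have ab: "1 + a / (1 - 0) / \<beta> \<noteq> 0" by simp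
    have "S \<longlonglongrightarrow> (a / (1 - 0) * (1 + (0 + 0 / \<beta>)) + 0) / (1 + a / (1 - 0) / \<beta>)"
      unfolding S_def using bpos apos ab
      by (intro tendsto_intros th g2 lim_const_over_n) (auto simp: add_pos_pos)
    moreover have "(a / (1 - 0) * (1 + (0 + 0 / \<beta>)) + 0) / (1 + a / (1 - 0) / \<beta>) = \<rho>"
      unfolding \<rho>_def using bpos apos by (simp add: field_simps)
    ultimately have S1: "S \<longlonglongrightarrow> \<rho>" by simp
    have "u \<longlonglongrightarrow> max 0 \<rho>" unfolding u_def by (intro tendsto_max g1 S1)
    moreover have "max 0 \<rho> = \<rho>" unfolding \<rho>_def using bpos apos by simp
    ultimately show ?thesis by simp
  qed
  have "R_hash b k \<le> limsup (\<lambda>n. ereal (u n))"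
    unfolding R_hash_def
    by (rule Limsup_mono) (use bound in \<open>auto intro!: eventually_sequentiallyI[of 1]\<close>)
  also have "limsup (\<lambda>n. ereal (u n)) = ereal \<rho>"
    by (rule lim_imp_Limsup[OF sequentially_bot]) (simp add: lim_ereal lim)
  finally show ?thesis unfolding target .
qed

end
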